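(* Let $A$ and $B$ be disjoint graphs, $a\in V(A)$ with $N(a,A)=\{a_1,a_2,a_3\}$, $b\in V(B)$ with $N(b,B)=\{b_1,b_2,b_3\}$, and $G=Aa\sigma bB$ where $\sigma(a_i)=b_i$ for each $i$. Let $P$ be a $\Lambda$-factor of $G$, and let $P'$ be the subgraph of $P$ consisting of those components (3-vertex paths) of $P$ that contain at least one of the edges $a_1b_1,a_2b_2,a_3b_3$. (a1) If $v(A)\equiv 0\pmod 3$ (so $v(B)\equiv 2 \pmod 3$), then one of the following holds: (a1.1) $P'$ has exactly one component, and it has exactly two vertices in $A-a$, these being adjacent, and exactly one vertex in $B-b$; (a1.2) $P'$ has exactly two components, each having exactly one vertex in $A-a$ and exactly two vertices in $B-b$, these being adjacent; (a1.3) $P'$ has exactly three components $L_1,L_2,L_3$, where (up to renaming) $L_1$ has exactly one vertex in $A-a$ and exactly two adjacent vertices in $B-b$, and each of $L_2,L_3$ has exactly two adjacent vertices in $A-a$ and exactly one vertex in $B-b$. (a2) If $v(A)\equiv 1\pmod 3$ (so $v(B)\equiv 1\pmod 3$), then one of the following holds: (a2.1) $P'=\emptyset$; (a2.2) $P'$ has exactly two components $L_1,L_2$, where (up to renaming) $L_1$ has exactly one vertex in $A-a$ and exactly two adjacent vertices in $B-b$, and $L_2$ has exactly two adjacent vertices in $A-a$ and exactly one vertex in $B-b$; (a2.3) $P'$ has exactly three components $L_1,L_2,L_3$, and either each $L_i$ has exactly one vertex in $A-a$ and exactly two adjacent vertices in $B-b$, or each $L_i$ has exactly two adjacent vertices in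 $A-a$ and exactly one vertex in $B-b$.
   Context: Graphs are finite, undirected, without loops or multiple edges; $v(G)=|V(G)|$; $N(x,G)$ is the set of neighbours of $x$. For disjoint graphs $A,B$, vertices $a\in V(A)$, $b\in V(B)$ and a bijection $\sigma: N(a,A)\to N(b,B)$, $Aa\sigma bB$ is $(A-a)\cup(B-b)$ together with the new edges $\{x\sigma(x): x\in N(a,A)\}$. A $\Lambda$-factor of $G$ is a spanning subgraph each of whose components is a path on 3 vertices. *)

theory Defs
  imports Main
begin

definition is_graph :: "'a set \<Rightarrow> 'a set set \<Rightarrow> bool" where
  "is_graph V E \<longleftrightarrow> finite V \<and> (\<forall>e\<in>E. \<exists>x y. e = {x, y} \<and> x \<noteq> y \<and> x \<in> V \<and> y \<in> V)"

definition nbhd :: "'a set set \<Rightarrow> 'a \<Rightarrow> 'a set" where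
  "nbhd E x = {y. {x, y} \<in> E}"

definition glue_V :: "'a set \<Rightarrow> 'a \<Rightarrow> 'a \<Rightarrow> 'a set \<Rightarrow> 'a set" where
  "glue_V VA a b VB = (VA - {a}) \<union> (VB - {b})"

definition glue_E :: "'a set set \<Rightarrow> 'a \<Rightarrow> ('a \<Rightarrow> 'a) \<Rightarrow> 'a \<Rightarrow> 'a set set \<Rightarrow> 'a set set" where
  "glue_E EA a \<sigma> b EB = {e \<in> EA. a \<notin> e} \<union> {e \<in> EB. b \<notin> e} \<union> {{x, \<sigma> x} | x. x \<in> nbhd EA a}"

definition comp :: "'a set set \<Rightarrow> 'a \<Rightarrow> 'a set" where
  "comp F v = {u. (v, u) \<in> {(x, y). {x, y} \<in> F}\<^sup>*}"

definition is_P3 :: "'a set \<Rightarrow> 'a set set \<Rightarrow> bool" where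
  "is_P3 C F' \<longleftrightarrow> (\<exists>x y z. x \<noteq> y \<and> y \<noteq> z \<and> x \<noteq> z \<and> C = {x, y, z} \<and> F' = {{x, y}, {y, z}})"

definition lambda_factor :: "'a set \<Rightarrow> 'a set set \<Rightarrow> 'a set set \<Rightarrow> bool" where
  "lambda_factor V E F \<longleftrightarrow> F \<subseteq> E \<and> (\<forall>v\<in>V. is_P3 (comp F v) {e \<in> F. e \<subseteq> comp F v})"

definition components :: "'a set \<Rightarrow> 'a set set \<Rightarrow> 'a set set" where
  "components V F = {comp F v | v. v \<in> V}"

definition sub_comps :: "'a set \<Rightarrow> 'a set set \<Rightarrow> 'a set set \<Rightarrow> 'a set set" where
  "sub_comps V F X = {C \<in> components V F. \<exists>e\<in>X. e \<in> F \<and> e \<subseteq> C}"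

definition two_one :: "'a set set \<Rightarrow> 'a set \<Rightarrow> 'a set \<Rightarrow> 'a set \<Rightarrow> bool" where
  "two_one F S T C \<longleftrightarrow> card (C \<inter> S) = 2 \<and> C \<inter> S \<in> F \<and> card (C \<inter> T) = 1"

end

theory Submission
  imports Defs
begin

lemma comp_refl: "v \<in> comp F v" unfolding comp_def by simp

lemma comp_eq:
  assumes "u \<in> comp F v" shows "comp F u = comp F v"
proof -
  let ?R = "{(x,y). {x,y} \<in> F}"
  have sR: "?R\<inverse> = ?R" by (auto simp: insert_commute)
  have vu: "(v,u) \<in> ?R\<^sup>*" using assms by (simp add: comp_def)
  then have "(u,v) \<in> (?R\<inverse>)\<^sup>*" by (rule rtrancl_converseI)
  then have uv: "(u,v) \<in> ?R\<^sup>*" using sR by simp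
  show ?thesis unfolding comp_def using vu uv by (auto intro: rtrancl_trans)
qed

lemma comp_disj: "w \<in> comp F v1 \<Longrightarrow> w \<in> comp F v2 \<Longrightarrow> comp F v1 = comp F v2"
  by (metis comp_eq)

lemma nb: "is_graph VA EA \<Longrightarrow> {a,c} \<in> EA \<Longrightarrow> c \<in> VA \<and> c \<noteq> a"
  unfolding is_graph_def by (auto simp: doubleton_eq_iff) 

lemma half:
  assumes C: "C = {x,y,z}" and d: "x\<noteq>y" "y\<noteq>z" "x\<noteq>z"
  and eyz: "{y,z}\<in>F"
  and cls: "\<forall>e\<in>F. e \<subseteq> A \<or> e \<subseteq> B \<or> e \<in> X"
  and AB: "A \<inter> B = {}"
  and Xf: "\<forall>e\<in>X. \<exists>u w. e = {u,w} \<and> u \<in> A \<and> w \<in> B"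
  and Xd: "\<forall>e1\<in>X. \<forall>e2\<in>X. e1 \<inter> e2 \<noteq> {} \<longrightarrow> e1 = e2"
  and xyX: "{x,y} \<in> X"
  shows "(two_one F A B C \<and> card (C\<inter>A) = 2) \<or> (two_one F B A C \<and> card (C\<inter>A) = 1)"
proof -
  have yzX: "{y,z} \<notin> X"
  proof
    assume yz: "{y,z}\<in>X"
    have "{x,y} \<inter> {y,z} \<noteq> {}" by auto
    then have "{x,y} = {y,z}" using Xd[rule_format, OF xyX yz] by blast
    then show False using d by (auto simp: doubleton_eq_iff)
  qed
  obtain u w where uw: "{x,y} = {u,w}" "u\<in>A" "w\<in>B" using Xf xyX by blast
  have yz: "{y,z} \<subseteq> A \<or> {y,z} \<subseteq> B" using cls eyz yzX by blast
  show ?thesis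
  proof (cases "y \<in> A")
    case True
    then have "y = u" "x = w" using uw AB by (auto simp: doubleton_eq_iff)
    then have "{y,z} \<subseteq> A" using yz True uw AB by auto
    then have "C \<inter> A = {y,z}" "C \<inter> B = {x}" using C \<open>x = w\<close> uw AB by auto
    then show ?thesis using eyz d by (auto simp: two_one_def)
  next
    case False
    then have "y = w" "x = u" using uw AB by (auto simp: doubleton_eq_iff)
    then have "{y,z} \<subseteq> B" using yz False uw AB by auto
    then have "C \<inter> B = {y,z}" "C \<inter> A = {x}" using C \<open>x = u\<close> uw AB by auto
    then show ?thesis using eyz d by (auto simp: two_one_def)
  qed
qed

lemma analysis:
  assumes C: "C = {x,y,z}" and d: "x\<noteq>y" "y\<noteq>z" "x\<noteq>z"
  and exy: "{x,y}\<in>F" and eyz: "{y,z}\<in>F"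
  and EC: "{e\<in>F. e\<subseteq>C} = {{x,y},{y,z}}"
  and cls: "\<forall>e\<in>F. e \<subseteq> A \<or> e \<subseteq> B \<or> e \<in> X"
  and AB: "A \<inter> B = {}"
  and Xf: "\<forall>e\<in>X. \<exists>u w. e = {u,w} \<and> u \<in> A \<and> w \<in> B"
  and Xd: "\<forall>e1\<in>X. \<forall>e2\<in>X. e1 \<inter> e2 \<noteq> {} \<longrightarrow> e1 = e2"
  shows "((\<exists>e\<in>X. e\<in>F \<and> e\<subseteq>C) \<longrightarrow> ((two_one F A B C \<and> card (C\<inter>A) = 2) \<or> (two_one F B A C \<and> card (C\<inter>A) = 1)))
     \<and> (\<not>(\<exists>e\<in>X. e\<in>F \<and> e\<subseteq>C) \<longrightarrow> card (C\<inter>A) = 0 \<or> card (C\<inter>A) = 3)"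
proof (intro conjI impI)
  assume "\<exists>e\<in>X. e\<in>F \<and> e\<subseteq>C"
  then obtain e where e: "e \<in> X" "e \<in> F" "e \<subseteq> C" by blast
  then have "e \<in> {{x,y},{y,z}}" using EC by blast
  then show "(two_one F A B C \<and> card (C\<inter>A) = 2) \<or> (two_one F B A C \<and> card (C\<inter>A) = 1)"
  proof
    assume "e = {x,y}"
    then have "{x,y} \<in> X" using e by simp
    then show ?thesis by (rule half[OF C d eyz cls AB Xf Xd])
  next
    assume "e \<in> {{y,z}}"
    then have "{z,y} \<in> X" using e by (simp add: insert_commute)
    moreover have "C = {z,y,x}" using C by auto
    moreover have "{y,x} \<in> F" using exy by (simp add: insert_commute)
    ultimately show ?thesis using d by (intro half[of C z y x F A B X, OF _ _ _ _ _ cls AB Xf Xd]) auto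
  qed
next
  assume n: "\<not>(\<exists>e\<in>X. e\<in>F \<and> e\<subseteq>C)"
  have "{x,y} \<notin> X" "{y,z} \<notin> X" using n exy eyz C by auto
  then have "({x,y} \<subseteq> A \<or> {x,y} \<subseteq> B) \<and> ({y,z} \<subseteq> A \<or> {y,z} \<subseteq> B)" using cls exy eyz by blast
  then have "C \<subseteq> A \<or> C \<subseteq> B" using AB C by auto
  then show "card (C\<inter>A) = 0 \<or> card (C\<inter>A) = 3"
  proof
    assume "C \<subseteq> A" then have "C \<inter> A = C" by auto
    then show ?thesis using C d by simp
  next
    assume "C \<subseteq> B" then have "C \<inter> A = {}" using AB by auto
    then show ?thesis by simp
  qed
qed
lemma aux0: "(p::nat)+q \<le> 3 \<Longrightarrow> (2*p+q+1) mod 3 = 0 \<Longrightarrow> (p=1\<and>q=0) \<or> (p=0\<and>q=2) \<or> (p=2\<and>q=1)"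
proof -
  assume h: "p+q \<le> 3" "(2*p+q+1) mod 3 = 0"
  have "p \<in> {0,1,2,3}" "q \<in> {0,1,2,3}" using h(1) by auto
  then show ?thesis using h by (elim insertE emptyE) simp_all
qed

lemma aux1: "(p::nat)+q \<le> 3 \<Longrightarrow> (2*p+q+1) mod 3 = 1 \<Longrightarrow> (p=0\<and>q=0) \<or> (p=1\<and>q=1) \<or> (p=3\<and>q=0) \<or> (p=0\<and>q=3)"
proof -
  assume h: "p+q \<le> 3" "(2*p+q+1) mod 3 = 1"
  have "p \<in> {0,1,2,3}" "q \<in> {0,1,2,3}" using h(1) by auto
  then show ?thesis using h by (elim insertE emptyE) simp_all
qed

theorem mainTheorem6:
  fixes VA VB :: "'a set" and EA EB F :: "'a set set"
    and a a1 a2 a3 b b1 b2 b3 :: 'a and \<sigma> :: "'a \<Rightarrow> 'a"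
  assumes gA: "is_graph VA EA" and gB: "is_graph VB EB"
    and disj: "VA \<inter> VB = {}"
    and aA: "a \<in> VA" and bB: "b \<in> VB"
    and Na: "nbhd EA a = {a1, a2, a3}" and adist: "a1 \<noteq> a2" "a1 \<noteq> a3" "a2 \<noteq> a3"
    and Nb: "nbhd EB b = {b1, b2, b3}" and bdist: "b1 \<noteq> b2" "b1 \<noteq> b3" "b2 \<noteq> b3"
    and sig: "\<sigma> a1 = b1" "\<sigma> a2 = b2" "\<sigma> a3 = b3"
    and P: "lambda_factor (glue_V VA a b VB) (glue_E EA a \<sigma> b EB) F"
  defines "A' \<equiv> VA - {a}" and "B' \<equiv> VB - {b}"
    and "P' \<equiv> sub_comps (glue_V VA a b VB) F {{a1, b1}, {a2, b2}, {a3, b3}}"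
  shows
    "(card VA mod 3 = 0 \<longrightarrow>
        (card P' = 1 \<and> (\<forall>L\<in>P'. two_one F A' B' L))
      \<or> (card P' = 2 \<and> (\<forall>L\<in>P'. two_one F B' A' L))
      \<or> (\<exists>L1 L2 L3. P' = {L1, L2, L3} \<and> L1 \<noteq> L2 \<and> L1 \<noteq> L3 \<and> L2 \<noteq> L3 \<and>
           two_one F B' A' L1 \<and> two_one F A' B' L2 \<and> two_one F A' B' L3))
   \<and> (card VA mod 3 = 1 \<longrightarrow>
        P' = {}
      \<or> (\<exists>L1 L2. P' = {L1, L2} \<and> L1 \<noteq> L2 \<and> two_one F B' A' L1 \<and> two_one F A' B' L2)
      \<or> (\<exists>L1 L2 L3. P' = {L1, L2, L3} \<and> L1 \<noteq> L2 \<and> L1 \<noteq> L3 \<and> L2 \<noteq> L3 \<and>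
           ((two_one F B' A' L1 \<and> two_one F B' A' L2 \<and> two_one F B' A' L3) \<or>
            (two_one F A' B' L1 \<and> two_one F A' B' L2 \<and> two_one F A' B' L3))))"
proof -
  define V where "V = glue_V VA a b VB"
  define E where "E = glue_E EA a \<sigma> b EB"
  define X where "X = {{a1,b1},{a2,b2},{a3,b3}}"
  define comps where "comps = components V F"
  have P'eq: "P' = {C \<in> comps. \<exists>e\<in>X. e\<in>F \<and> e\<subseteq>C}"
    unfolding P'_def V_def X_def comps_def sub_comps_def by (rule refl)
  have FE: "F \<subseteq> E" and LF: "\<forall>v\<in>V. is_P3 (comp F v) {e\<in>F. e \<subseteq> comp F v}"
    using P unfolding lambda_factor_def V_def E_def by auto
  have finVA: "finite VA" using gA unfolding is_graph_def by blast
  have finVB: "finite VB" using gB unfolding is_graph_def by blast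
  have VAB: "V = A' \<union> B'" by (simp add: V_def glue_V_def A'_def B'_def)
  have AB: "A' \<inter> B' = {}" using disj A'_def B'_def by auto
  have finA: "finite A'" using finVA A'_def by simp
  have finV: "finite V" using VAB finA finVB B'_def by simp
  have aiA: "a1 \<in> A'" "a2 \<in> A'" "a3 \<in> A'"
  proof -
    have "a1 \<in> nbhd EA a" "a2 \<in> nbhd EA a" "a3 \<in> nbhd EA a" using Na by simp_all
    then have "{a,a1} \<in> EA" "{a,a2} \<in> EA" "{a,a3} \<in> EA" by (simp_all add: nbhd_def)
    then show "a1 \<in> A'" "a2 \<in> A'" "a3 \<in> A'" using nb[OF gA] A'_def by auto
  qed
  have biB: "b1 \<in> B'" "b2 \<in> B'" "b3 \<in> B'"
  proof -
    have "b1 \<in> nbhd EB b" "b2 \<in> nbhd EB b" "b3 \<in> nbhd EB b" using Nb by simp_all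
    then have "{b,b1} \<in> EB" "{b,b2} \<in> EB" "{b,b3} \<in> EB" by (simp_all add: nbhd_def)
    then show "b1 \<in> B'" "b2 \<in> B'" "b3 \<in> B'" using nb[OF gB] B'_def by auto
  qed
  have Xf: "\<forall>e\<in>X. \<exists>u w. e = {u,w} \<and> u \<in> A' \<and> w \<in> B'"
    unfolding X_def using aiA biB by blast
  have ne: "a1 \<noteq> b1" "a1 \<noteq> b2" "a1 \<noteq> b3" "a2 \<noteq> b1" "a2 \<noteq> b2" "a2 \<noteq> b3"
     "a3 \<noteq> b1" "a3 \<noteq> b2" "a3 \<noteq> b3" using aiA biB AB by auto
  have Xd: "\<forall>e1\<in>X. \<forall>e2\<in>X. e1 \<inter> e2 \<noteq> {} \<longrightarrow> e1 = e2"
    unfolding X_def using ne adist bdist ne[THEN not_sym] adist[THEN not_sym] bdist[THEN not_sym] by simp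
  have clsE: "\<forall>e\<in>E. e \<subseteq> A' \<or> e \<subseteq> B' \<or> e \<in> X"
  proof
    fix e assume "e \<in> E"
    then consider "e \<in> EA" "a \<notin> e" | "e \<in> EB" "b \<notin> e" | x where "e = {x, \<sigma> x}" "x \<in> nbhd EA a"
      unfolding E_def glue_E_def by blast
    then show "e \<subseteq> A' \<or> e \<subseteq> B' \<or> e \<in> X"
    proof cases
      case 1
      then obtain x y where "e={x,y}" "x\<in>VA" "y\<in>VA" using gA unfolding is_graph_def by blast
      then have "e \<subseteq> A'" using 1(2) A'_def by auto
      then show ?thesis by blast
    next
      case 2
      then obtain x y where "e={x,y}" "x\<in>VB" "y\<in>VB" using gB unfolding is_graph_def by blast
      then have "e \<subseteq> B'" using 2(2) B'_def by auto
      then show ?thesis by blast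
    next
      case 3
      then have "x=a1 \<or> x=a2 \<or> x=a3" using Na by simp
      then show ?thesis using 3(1) sig unfolding X_def by auto
    qed
  qed
  have cls: "\<forall>e\<in>F. e \<subseteq> A' \<or> e \<subseteq> B' \<or> e \<in> X" using clsE FE by blast
  have info: "\<exists>x y z. comp F v = {x,y,z} \<and> x\<noteq>y \<and> y\<noteq>z \<and> x\<noteq>z \<and> {x,y}\<in>F \<and> {y,z}\<in>F
      \<and> {e\<in>F. e \<subseteq> comp F v} = {{x,y},{y,z}}" if vV: "v \<in> V" for v
  proof -
    obtain x y z where xyz: "x\<noteq>y" "y\<noteq>z" "x\<noteq>z" "comp F v = {x,y,z}"
      "{e\<in>F. e \<subseteq> comp F v} = {{x,y},{y,z}}"
      using LF vV unfolding is_P3_def by blast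
    then have "{x,y} \<in> {e\<in>F. e \<subseteq> comp F v}" "{y,z} \<in> {e\<in>F. e \<subseteq> comp F v}" by auto
    then show ?thesis using xyz by (intro exI[of _ x] exI[of _ y] exI[of _ z]) simp
  qed
  have compsI: "comps = comp F ` V" unfolding comps_def components_def by blast
  have fincomps: "finite comps" using compsI finV by simp
  have A'U: "A' = (\<Union>C\<in>comps. C \<inter> A')"
  proof
    show "A' \<subseteq> (\<Union>C\<in>comps. C \<inter> A')"
    proof
      fix v assume "v \<in> A'"
      then have "v \<in> V" "v \<in> comp F v" using VAB comp_refl by auto
      then show "v \<in> (\<Union>C\<in>comps. C \<inter> A')" using compsI \<open>v \<in> A'\<close> by blast
    qed
  qed blast
  have cdisj: "C1 = C2" if h: "C1 \<in> comps" "C2 \<in> comps" "w \<in> C1" "w \<in> C2" for C1 C2 w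
  proof -
    obtain v1 v2 where "C1 = comp F v1" "C2 = comp F v2" using h(1,2) compsI by blast
    then show ?thesis using h(3,4) comp_disj by metis
  qed
  have cardA: "card A' = (\<Sum>C\<in>comps. card (C\<inter>A'))"
  proof -
    have "card (\<Union>C\<in>comps. C \<inter> A') = (\<Sum>C\<in>comps. card (C\<inter>A'))"
      apply (rule card_UN_disjoint)
      using fincomps finA apply simp_all
      using cdisj by blast
    then show ?thesis using A'U by simp
  qed
  have an: "((\<exists>e\<in>X. e\<in>F \<and> e\<subseteq>C) \<longrightarrow> ((two_one F A' B' C \<and> card (C\<inter>A') = 2) \<or> (two_one F B' A' C \<and> card (C\<inter>A') = 1)))
     \<and> (\<not>(\<exists>e\<in>X. e\<in>F \<and> e\<subseteq>C) \<longrightarrow> card (C\<inter>A') = 0 \<or> card (C\<inter>A') = 3)" if Cc: "C \<in> comps" for C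
  proof -
    obtain v where v: "v \<in> V" "C = comp F v" using Cc compsI by blast
    obtain x y z where xyz: "comp F v = {x,y,z}" "x\<noteq>y" "y\<noteq>z" "x\<noteq>z" "{x,y}\<in>F" "{y,z}\<in>F"
      "{e\<in>F. e \<subseteq> comp F v} = {{x,y},{y,z}}" using info[OF v(1)] by blast
    have Cx: "C = {x,y,z}" using v xyz by simp
    have EC: "{e\<in>F. e\<subseteq>C} = {{x,y},{y,z}}" using v xyz by simp
    show ?thesis by (rule analysis[OF Cx xyz(2-6) EC cls AB Xf Xd])
  qed
  define P1 where "P1 = {C\<in>P'. two_one F A' B' C}"
  define P2 where "P2 = {C\<in>P'. two_one F B' A' C}"
  have P'sub: "P' \<subseteq> comps" using P'eq by blast
  have finP': "finite P'" using P'sub fincomps finite_subset by blast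
  have P'split: "P' = P1 \<union> P2" using an P'eq unfolding P1_def P2_def by blast
  have P1c: "card (C \<inter> A') = 2" if "C \<in> P1" for C using that unfolding P1_def two_one_def by simp
  have P2c: "card (C \<inter> A') = 1" if "C \<in> P2" for C using that unfolding P2_def two_one_def by simp
  have P12: "P1 \<inter> P2 = {}" using P1c P2c by fastforce
  have finP1: "finite P1" and finP2: "finite P2" using finP' P'split by auto
  have cardP': "card P' \<le> 3"
  proof -
    define g where "g C = (SOME e. e\<in>X \<and> e\<in>F \<and> e\<subseteq>C)" for C
    have g: "g C \<in> X \<and> g C \<in> F \<and> g C \<subseteq> C" if "C \<in> P'" for C
      unfolding g_def using that P'eq by (metis (mono_tags, lifting) someI_ex mem_Collect_eq)
    have "inj_on g P'"
    proof
      fix C1 C2 assume c: "C1 \<in> P'" "C2 \<in> P'" "g C1 = g C2"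
      have "g C1 \<in> X" using g[OF c(1)] by blast
      then obtain u w where "g C1 = {u,w}" using Xf by meson
      then have "u \<in> C1" "u \<in> C2" using g[OF c(1)] g[OF c(2)] c(3) by auto
      then show "C1 = C2" using cdisj c P'sub by blast
    qed
    moreover have "g ` P' \<subseteq> X" using g by blast
    ultimately have "card P' \<le> card X" using card_inj_on_le X_def by (metis finite.emptyI finite.insertI)
    moreover have "card X \<le> 3" unfolding X_def by (auto simp: card_insert_if)
    ultimately show ?thesis by simp
  qed
  have cP': "card P' = card P1 + card P2" using P'split P12 finP1 finP2 card_Un_disjoint by metis
  have sumsplit: "(\<Sum>C\<in>comps. card (C\<inter>A')) = (\<Sum>C\<in>P1. card (C\<inter>A')) + (\<Sum>C\<in>P2. card (C\<inter>A'))
      + (\<Sum>C\<in>comps - P'. card (C\<inter>A'))"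
  proof -
    have "comps = P' \<union> (comps - P')" using P'sub by blast
    then have "(\<Sum>C\<in>comps. card (C\<inter>A')) = (\<Sum>C\<in>P'. card (C\<inter>A')) + (\<Sum>C\<in>comps - P'. card (C\<inter>A'))"
      using fincomps finP' by (metis Diff_disjoint finite_Diff sum.union_disjoint)
    moreover have "(\<Sum>C\<in>P'. card (C\<inter>A')) = (\<Sum>C\<in>P1. card (C\<inter>A')) + (\<Sum>C\<in>P2. card (C\<inter>A'))"
      using P'split P12 finP1 finP2 sum.union_disjoint by metis
    ultimately show ?thesis by simp
  qed
  have s1: "(\<Sum>C\<in>P1. card (C\<inter>A')) = 2 * card P1" using P1c by simp
  have s2: "(\<Sum>C\<in>P2. card (C\<inter>A')) = card P2" using P2c by simp
  have s3: "3 dvd (\<Sum>C\<in>comps - P'. card (C\<inter>A'))"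
  proof (rule dvd_sum)
    fix C assume "C \<in> comps - P'"
    then have "card (C\<inter>A') = 0 \<or> card (C\<inter>A') = 3" using an P'eq by auto
    then show "3 dvd card (C\<inter>A')" by auto
  qed
  then obtain k where k: "(\<Sum>C\<in>comps - P'. card (C\<inter>A')) = 3 * k" by blast
  have cVA: "card VA = card A' + 1"
    using finVA aA A'_def card_Diff_singleton by (metis Suc_eq_plus1 card_Suc_Diff1)
  have main: "card VA = 2 * card P1 + card P2 + 3 * k + 1"
    using cVA cardA sumsplit s1 s2 k by simp
  have pq: "card P1 + card P2 \<le> 3" using cP' cardP' by simp
  have m3: "card VA mod 3 = (2 * card P1 + card P2 + 1) mod 3" using main by simp
  have P1t: "\<forall>L\<in>P1. two_one F A' B' L" and P2t: "\<forall>L\<in>P2. two_one F B' A' L"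
    unfolding P1_def P2_def by auto
  show ?thesis
  proof (intro conjI impI)
    assume "card VA mod 3 = 0"
    then have "(card P1 = 1 \<and> card P2 = 0) \<or> (card P1 = 0 \<and> card P2 = 2) \<or> (card P1 = 2 \<and> card P2 = 1)"
      using aux0[OF pq] m3 by simp
    then show "(card P' = 1 \<and> (\<forall>L\<in>P'. two_one F A' B' L))
      \<or> (card P' = 2 \<and> (\<forall>L\<in>P'. two_one F B' A' L))
      \<or> (\<exists>L1 L2 L3. P' = {L1, L2, L3} \<and> L1 \<noteq> L2 \<and> L1 \<noteq> L3 \<and> L2 \<noteq> L3 \<and>
           two_one F B' A' L1 \<and> two_one F A' B' L2 \<and> two_one F A' B' L3)"
    proof (elim disjE conjE)
      assume "card P1 = 1" "card P2 = 0"
      then have "P2 = {}" using finP2 by simp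
      then show ?thesis using cP' P'split P1t \<open>card P1 = 1\<close> \<open>card P2 = 0\<close> by simp
    next
      assume "card P1 = 0" "card P2 = 2"
      then have "P1 = {}" using finP1 by simp
      then show ?thesis using cP' P'split P2t \<open>card P1 = 0\<close> \<open>card P2 = 2\<close> by simp
    next
      assume "card P1 = 2" "card P2 = 1"
      then obtain L1 where L1: "P2 = {L1}" by (metis card_1_singletonE)
      obtain L2 L3 where L23: "P1 = {L2,L3}" "L2 \<noteq> L3" using \<open>card P1 = 2\<close> card_2_iff by metis
      have "P' = {L1,L2,L3}" using P'split L1 L23 by auto
      moreover have "L1 \<noteq> L2" "L1 \<noteq> L3" using P12 L1 L23 by auto
      ultimately show ?thesis using P1t P2t L1 L23 by auto
    qed
  next
    assume "card VA mod 3 = 1"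
    then have "(card P1 = 0 \<and> card P2 = 0) \<or> (card P1 = 1 \<and> card P2 = 1) \<or> (card P1 = 3 \<and> card P2 = 0)
       \<or> (card P1 = 0 \<and> card P2 = 3)"
      using aux1[OF pq] m3 by simp
    then show "P' = {}
      \<or> (\<exists>L1 L2. P' = {L1, L2} \<and> L1 \<noteq> L2 \<and> two_one F B' A' L1 \<and> two_one F A' B' L2)
      \<or> (\<exists>L1 L2 L3. P' = {L1, L2, L3} \<and> L1 \<noteq> L2 \<and> L1 \<noteq> L3 \<and> L2 \<noteq> L3 \<and>
           ((two_one F B' A' L1 \<and> two_one F B' A' L2 \<and> two_one F B' A' L3) \<or>
            (two_one F A' B' L1 \<and> two_one F A' B' L2 \<and> two_one F A' B' L3)))"
    proof (elim disjE conjE)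
      assume "card P1 = 0" "card P2 = 0"
      then have "P1 = {}" "P2 = {}" using finP1 finP2 by auto
      then show ?thesis using P'split by simp
    next
      assume "card P1 = 1" "card P2 = 1"
      then obtain L1 L2 where L: "P2 = {L1}" "P1 = {L2}" by (metis card_1_singletonE)
      then have "L1 \<noteq> L2" using P12 by auto
      then show ?thesis using L P'split P1t P2t by auto
    next
      assume "card P1 = 3" "card P2 = 0"
      then have "P2 = {}" using finP2 by simp
      obtain L1 L2 L3 where "P1 = {L1,L2,L3}" "L1 \<noteq> L2" "L2 \<noteq> L3" "L1 \<noteq> L3"
        using \<open>card P1 = 3\<close> card_3_iff by metis
      then show ?thesis using \<open>P2 = {}\<close> P'split P1t by auto
    next
      assume "card P1 = 0" "card P2 = 3"
      then have "P1 = {}" using finP1 by simp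
      obtain L1 L2 L3 where "P2 = {L1,L2,L3}" "L1 \<noteq> L2" "L2 \<noteq> L3" "L1 \<noteq> L3"
        using \<open>card P2 = 3\<close> card_3_iff by metis
      then show ?thesis using \<open>P1 = {}\<close> P'split P2t by auto
    qed
  qed
qed

end
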